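(* For every $2\le n\le N$, as an identity of rational functions of $x$, $$\mathbb K_{n-1}(x)=\mathscr C_{2,n}(x)\,K_n(x)+\mathscr D_{2,n}(x)\,K_{n-1}(x),$$ where $\mathscr C_{2,n}(x)=-\dfrac{\mathscr D_{1,n-1}(x)}{\beta_{n-1}}$ and $\mathscr D_{2,n}(x)=\mathscr C_{1,n-1}(x)+\mathscr C_{2,n}(x)\,(\alpha_{n-1}-x)$.
   Context: Fix an integer $N\ge 1$ and $0<p<1$. Notation: $(a)_0=1$, $(a)_k=a(a+1)\cdots(a+k-1)$ (Pochhammer symbol); $[z]_0=1$, $[z]_k=z(z-1)\cdots(z-k+1)$ (falling factorial). For a function $f$, $\Delta f(x)=f(x+1)-f(x)$, $\nabla f(x)=f(x)-f(x-1)$, $\Delta^0$ is the identity and $\Delta^k=\Delta\circ\Delta^{k-1}$. For $0\le n\le N$ the monic Kravchuk polynomial is $K_n(x)=p^n(-N)_n\sum_{k=0}^{n}\frac{(-n)_k(-x)_k}{(-N)_k\,k!}p^{-k}$, and $K_{-1}=0$; these are monic of degree $n$ and orthogonal on $\{0,\dots,N\}$ with respect to the binomial weight $w(x)=\binom{N}{x}p^x(1-p)^{N-x}$, with $\|K_n\|^2=\sum_{x=0}^N K_n(x)^2w(x)=n!(-N)_np^n(p-1)^n$. They satisfy $xK_n=K_{n+1}+\alpha_nK_n+\beta_nK_{n-1}$ with $\alpha_n=p(N-n)+n(1-p)$, $\beta_n=np(1-p)(N-n+1)$. For $1\le n\le N+1$ and integers $i,l\ge0$, $\mathscr K_{n-1}^{(i,l)}(x,y)=\sum_{k=0}^{n-1}\frac{\Delta^iK_k(x)\,\Delta^lK_k(y)}{\|K_k\|^2}$.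 Fix $\lambda,\mu>0$ and an integer $j\ge 0$. On real polynomials define $\langle f,g\rangle_{\lambda,\mu}=\sum_{x=0}^N f(x)g(x)w(x)+\lambda\Delta^jf(0)\Delta^jg(0)+\mu\Delta^jf(N)\Delta^jg(N)$. For $0\le n\le N$, $\mathbb K_n=\mathbb K_n^{(j)}$ is the monic polynomial of degree $n$ with $\langle\mathbb K_n,q\rangle_{\lambda,\mu}=0$ for all polynomials $q$ of degree $<n$ (Kravchuk–Sobolev polynomials). For $1\le n\le N$: $\mathscr A_n(x,y)=\frac{j!}{\|K_{n-1}\|^2[x-y]_{j+1}}\sum_{k=0}^{j}\frac{\Delta^kK_{n-1}(y)}{k!}[x-y]_k$, $\mathscr B_n(x,y)=-\frac{j!}{\|K_{n-1}\|^2[x-y]_{j+1}}\sum_{k=0}^{j}\frac{\Delta^kK_{n}(y)}{k!}[x-y]_k$; $k_{00}=\mathscr K^{(j,j)}_{n-1}(0,0)$, $k_{0N}=\mathscr K^{(j,j)}_{n-1}(0,N)$, $k_{N0}=\mathscr K^{(j,j)}_{n-1}(N,0)$, $k_{NN}=\mathscr K^{(j,j)}_{n-1}(N,N)$, $d_0=\Delta^jK_n(0)$, $d_N=\Delta^jK_n(N)$, $\delta_n=(1+\lambda k_{00})(1+\mu k_{NN})-\lambda\mu k_{0N}k_{N0}$ (which is nonzero), $\Phi_1(n)=\frac{d_0(1+\mu k_{NN})-\mu k_{0N}d_N}{\delta_n}$, $\Phi_2(n)=\frac{(1+\lambda k_{00})d_N-\lambda k_{N0}d_0}{\delta_n}$;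 $\mathscr C_{1,n}(x)=1-\lambda\Phi_1(n)\mathscr A_n(x,0)-\mu\Phi_2(n)\mathscr A_n(x,N)$ and $\mathscr D_{1,n}(x)=-\lambda\Phi_1(n)\mathscr B_n(x,0)-\mu\Phi_2(n)\mathscr B_n(x,N)$. *)

theory Defs
  imports "HOL-Computational_Algebra.Polynomial" Complex_Main
begin

definition fdiff :: "(real \<Rightarrow> real) \<Rightarrow> real \<Rightarrow> real" where
  "fdiff f x = f (x + 1) - f x"

abbreviation fdiff_pow :: "nat \<Rightarrow> (real \<Rightarrow> real) \<Rightarrow> real \<Rightarrow> real" where
  "fdiff_pow i f \<equiv> (fdiff ^^ i) f"

definition ffac :: "real \<Rightarrow> nat \<Rightarrow> real" where
  "ffac z k = (\<Prod>i<k. z - real i)"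

definition bweight :: "nat \<Rightarrow> real \<Rightarrow> nat \<Rightarrow> real" where
  "bweight N p x = real (N choose x) * p ^ x * (1 - p) ^ (N - x)"

text \<open>Monic Kravchuk polynomial K_n (as a function of x).\<close>
definition krav :: "nat \<Rightarrow> real \<Rightarrow> nat \<Rightarrow> real \<Rightarrow> real" where
  "krav N p n x = p ^ n * pochhammer (- real N) n *
     (\<Sum>k=0..n. pochhammer (- real n) k * pochhammer (- x) k
                 / (pochhammer (- real N) k * fact k) * (1 / p) ^ k)"

definition krav_nrm :: "nat \<Rightarrow> real \<Rightarrow> nat \<Rightarrow> real" where
  "krav_nrm N p n = (\<Sum>x=0..N. (krav N p n (real x))^2 * bweight N p x)"

definition alpha_c :: "nat \<Rightarrow> real \<Rightarrow> nat \<Rightarrow> real" where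
  "alpha_c N p n = p * (real N - real n) + real n * (1 - p)"

definition beta_c :: "nat \<Rightarrow> real \<Rightarrow> nat \<Rightarrow> real" where
  "beta_c N p n = real n * p * (1 - p) * (real N - real n + 1)"

text \<open>Kernel polynomial (script K)_{n-1}^{(i,l)}(x,y); argument n means the sum over k = 0..n-1.\<close>
definition kker :: "nat \<Rightarrow> real \<Rightarrow> nat \<Rightarrow> nat \<Rightarrow> nat \<Rightarrow> real \<Rightarrow> real \<Rightarrow> real" where
  "kker N p n i l x y = (\<Sum>k<n. fdiff_pow i (krav N p k) x * fdiff_pow l (krav N p k) y
                                  / krav_nrm N p k)"

definition sob_ip :: "nat \<Rightarrow> real \<Rightarrow> real \<Rightarrow> real \<Rightarrow> nat \<Rightarrow> real poly \<Rightarrow> real poly \<Rightarrow> real" where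
  "sob_ip N p lam mu j f g =
     (\<Sum>x=0..N. poly f (real x) * poly g (real x) * bweight N p x)
     + lam * fdiff_pow j (poly f) 0 * fdiff_pow j (poly g) 0
     + mu * fdiff_pow j (poly f) (real N) * fdiff_pow j (poly g) (real N)"

definition ks_poly :: "nat \<Rightarrow> real \<Rightarrow> real \<Rightarrow> real \<Rightarrow> nat \<Rightarrow> nat \<Rightarrow> real poly" where
  "ks_poly N p lam mu j n = (THE q. degree q = n \<and> lead_coeff q = 1 \<and>
      (\<forall>r. degree r < n \<longrightarrow> sob_ip N p lam mu j q r = 0))"

definition ks :: "nat \<Rightarrow> real \<Rightarrow> real \<Rightarrow> real \<Rightarrow> nat \<Rightarrow> nat \<Rightarrow> real \<Rightarrow> real" where
  "ks N p lam mu j n x = poly (ks_poly N p lam mu j n) x"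

definition A_fn :: "nat \<Rightarrow> real \<Rightarrow> nat \<Rightarrow> nat \<Rightarrow> real \<Rightarrow> real \<Rightarrow> real" where
  "A_fn N p j n x y = fact j / (krav_nrm N p (n - 1) * ffac (x - y) (j + 1)) *
      (\<Sum>k=0..j. fdiff_pow k (krav N p (n - 1)) y / fact k * ffac (x - y) k)"

definition B_fn :: "nat \<Rightarrow> real \<Rightarrow> nat \<Rightarrow> nat \<Rightarrow> real \<Rightarrow> real \<Rightarrow> real" where
  "B_fn N p j n x y = - (fact j / (krav_nrm N p (n - 1) * ffac (x - y) (j + 1)) *
      (\<Sum>k=0..j. fdiff_pow k (krav N p n) y / fact k * ffac (x - y) k))"

definition delta_c :: "nat \<Rightarrow> real \<Rightarrow> real \<Rightarrow> real \<Rightarrow> nat \<Rightarrow> nat \<Rightarrow> real" where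
  "delta_c N p lam mu j n =
     (1 + lam * kker N p n j j 0 0) * (1 + mu * kker N p n j j (real N) (real N))
     - lam * mu * kker N p n j j 0 (real N) * kker N p n j j (real N) 0"

definition Phi1 :: "nat \<Rightarrow> real \<Rightarrow> real \<Rightarrow> real \<Rightarrow> nat \<Rightarrow> nat \<Rightarrow> real" where
  "Phi1 N p lam mu j n =
     (fdiff_pow j (krav N p n) 0 * (1 + mu * kker N p n j j (real N) (real N))
      - mu * kker N p n j j 0 (real N) * fdiff_pow j (krav N p n) (real N))
     / delta_c N p lam mu j n"

definition Phi2 :: "nat \<Rightarrow> real \<Rightarrow> real \<Rightarrow> real \<Rightarrow> nat \<Rightarrow> nat \<Rightarrow> real" where
  "Phi2 N p lam mu j n =
     ((1 + lam * kker N p n j j 0 0) * fdiff_pow j (krav N p n) (real N)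
      - lam * kker N p n j j (real N) 0 * fdiff_pow j (krav N p n) 0)
     / delta_c N p lam mu j n"

definition C1 :: "nat \<Rightarrow> real \<Rightarrow> real \<Rightarrow> real \<Rightarrow> nat \<Rightarrow> nat \<Rightarrow> real \<Rightarrow> real" where
  "C1 N p lam mu j n x = 1 - lam * Phi1 N p lam mu j n * A_fn N p j n x 0
                           - mu * Phi2 N p lam mu j n * A_fn N p j n x (real N)"

definition D1 :: "nat \<Rightarrow> real \<Rightarrow> real \<Rightarrow> real \<Rightarrow> nat \<Rightarrow> nat \<Rightarrow> real \<Rightarrow> real" where
  "D1 N p lam mu j n x = - lam * Phi1 N p lam mu j n * B_fn N p j n x 0
                         - mu * Phi2 N p lam mu j n * B_fn N p j n x (real N)"

definition C2 :: "nat \<Rightarrow> real \<Rightarrow> real \<Rightarrow> real \<Rightarrow> nat \<Rightarrow> nat \<Rightarrow> real \<Rightarrow> real" where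
  "C2 N p lam mu j n x = - D1 N p lam mu j (n - 1) x / beta_c N p (n - 1)"

definition D2 :: "nat \<Rightarrow> real \<Rightarrow> real \<Rightarrow> real \<Rightarrow> nat \<Rightarrow> nat \<Rightarrow> real \<Rightarrow> real" where
  "D2 N p lam mu j n x = C1 N p lam mu j (n - 1) x
                         + C2 N p lam mu j n x * (alpha_c N p (n - 1) - x)"

end

theory Submission
  imports Defs
begin

lemma fdiff_pow_Suc: "fdiff_pow (Suc i) f x = fdiff_pow i f (x+1) - fdiff_pow i f x"
  by (simp add: fdiff_def)

lemma fdiff_pow_Suc': "fdiff_pow (Suc i) f = fdiff_pow i (fdiff f)"
  by (simp add: funpow_Suc_right del: funpow.simps)

lemma fdiff_pow_lin:
  "fdiff_pow i (\<lambda>x. a * f x + b * g x) y = a * fdiff_pow i f y + b * fdiff_pow i g y"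
  by (induction i arbitrary: y) (simp_all add: fdiff_def algebra_simps)

lemma fdiff_pow_sum:
  "fdiff_pow i (\<lambda>x. \<Sum>k\<in>A. f k x) y = (\<Sum>k\<in>A. fdiff_pow i (f k) y)"
  by (induction i arbitrary: y) (simp_all add: fdiff_def sum_subtractf)

lemma fdiff_pow_cmult:
  "fdiff_pow i (\<lambda>x. a * f x) y = a * fdiff_pow i f y"
  using fdiff_pow_lin[of i a f 0 f y] by simp

lemma fdiff_pow_local:
  assumes "\<And>k. k \<le> i \<Longrightarrow> f (y + real k) = g (y + real k)"
  shows "fdiff_pow i f y = fdiff_pow i g y"
  using assms
proof (induction i arbitrary: y)
  case 0
  then show ?case using 0[of 0] by simp
next
  case (Suc i)
  have a: "fdiff_pow i f y = fdiff_pow i g y"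
    using Suc.prems by (intro Suc.IH) auto
  have b: "fdiff_pow i f (y+1) = fdiff_pow i g (y+1)"
    using Suc.prems[of "Suc _"] by (intro Suc.IH) (auto simp: add.assoc)
  show ?case using a b by (simp only: fdiff_pow_Suc)
qed


lemma ffac_0[simp]: "ffac z 0 = 1" by (simp add: ffac_def)
lemma ffac_Suc: "ffac z (Suc k) = ffac z k * (z - real k)"
  by (simp add: ffac_def)
lemma ffac_Suc': "ffac z (Suc k) = z * ffac (z - 1) k"
  by (induction k) (simp_all add: ffac_Suc algebra_simps)

lemma key_alg0:
  fixes t A B u u2 P1 P2 P3 j :: real
  assumes "P3 = t * P2" "P3 = P1 * (t - j - 1)"
    and "t * B - (t - j - 1) * A = (j + 1) * (A + u * P1)"
  shows "t * (B + (u + u2) * P2) - (t - (j+1) - 1) * (A + u * P1)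
         = ((j+1) + 1) * (A + u * P1) + u2 * P3"
  using assms by algebra

lemma key_alg:
  fixes t A B d1 d2 F P1 P2 P3 :: real and j :: nat
  assumes "F \<noteq> 0" "P3 = t * P2" "P3 = P1 * (t - real (Suc j))"
    and "t * B - (t - real j - 1) * A = (real j + 1) * (A + d1 / F * P1)"
  shows "t * (B + (d1 + d2) / F * P2) - (t - real (Suc j) - 1) * (A + d1 / F * P1)
         = (real (Suc j) + 1) * ((A + d1 / F * P1) + d2 / ((real j + 2) * F) * P3)"
proof -
  have "t * (B + (d1/F + d2/F) * P2) - (t - (real j+1) - 1) * (A + d1/F * P1)
         = ((real j+1) + 1) * (A + d1/F * P1) + d2/F * P3"
    by (rule key_alg0) (use assms in \<open>auto simp: algebra_simps\<close>)
  moreover have "((real j+1) + 1) * (d2 / ((real j + 2) * F) * P3) = d2/F * P3"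
  proof -
    have "real j + 2 \<noteq> 0" by simp
    then have "(real j + 2) * (d2 / ((real j + 2) * F) * P3) = d2/F * P3"
      using assms(1) by (simp add: divide_simps)
    then show ?thesis by (simp add: add.assoc)
  qed
  ultimately show ?thesis by (simp add: add_divide_distrib distrib_left algebra_simps)
qed

lemma key_quot:
  fixes g :: "real \<Rightarrow> real" and x :: real
  defines "S \<equiv> \<lambda>j z. (\<Sum>k=0..j. fdiff_pow k g z / fact k * ffac (x - z) k)"
  shows "(x - y) * S j (y+1) - (x - y - real j - 1) * S j y = (real j + 1) * S (Suc j) y"
proof (induction j)
  case 0
  then show ?case by (simp add: S_def fdiff_def ffac_Suc algebra_simps)
next
  case (Suc j)
  have e1: "S (Suc j) (y+1) = S j (y+1) + fdiff_pow (Suc j) g (y+1) / fact (Suc j) * ffac (x - (y+1)) (Suc j)"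
    by (simp add: S_def)
  have e2: "S (Suc j) y = S j y + fdiff_pow (Suc j) g y / fact (Suc j) * ffac (x - y) (Suc j)"
    by (simp add: S_def)
  have e3: "S (Suc (Suc j)) y = S (Suc j) y + fdiff_pow (Suc (Suc j)) g y / fact (Suc (Suc j)) * ffac (x - y) (Suc (Suc j))"
    by (simp add: S_def)
  have f1: "fdiff_pow (Suc j) g (y+1) = fdiff_pow (Suc j) g y + fdiff_pow (Suc (Suc j)) g y"
    using fdiff_pow_Suc[of "Suc j" g y] by linarith
  have f2: "ffac (x - y) (Suc (Suc j)) = (x - y) * ffac (x - (y+1)) (Suc j)"
    by (simp add: ffac_Suc'[of _ "Suc j"] algebra_simps)
  have f3: "ffac (x - y) (Suc (Suc j)) = ffac (x - y) (Suc j) * (x - y - real (Suc j))"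
    by (simp add: ffac_Suc[of _ "Suc j"])
  have f4: "fact (Suc (Suc j)) = (real j + 2) * (fact (Suc j) :: real)"
    by (simp add: algebra_simps)
  show ?case
    unfolding e1 e3 e2 f1 f4
    by (rule key_alg[OF _ f2 f3 Suc.IH[unfolded e2]]) simp
qed

lemma quot_alg:
  fixes f t c A B S P1 P2 P3 :: real
  assumes "P3 = t * P2" "P3 = P1 * c" "P3 \<noteq> 0" "t * B - c * A = S"
  shows "f * B / P2 - f * A / P1 = f * S / P3"
proof -
  have "t \<noteq> 0" "P2 \<noteq> 0" "P1 \<noteq> 0" "c \<noteq> 0" using assms by auto
  have "f * B / P2 = f * (t * B) / P3" using assms(1) \<open>t \<noteq> 0\<close> by simp
  moreover have "f * A / P1 = f * (c * A) / P3" using assms(2) \<open>c \<noteq> 0\<close> by simp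
  moreover have "f * (t * B) / P3 - f * (c * A) / P3 = f * (t * B - c * A) / P3"
    by (simp add: diff_divide_distrib right_diff_distrib)
  ultimately show ?thesis using assms(4) by simp
qed

lemma fdiff_quot:
  fixes g :: "real \<Rightarrow> real"
  assumes "ffac (x - y) (Suc j) \<noteq> 0"
  shows "fdiff_pow j (\<lambda>t. g t / (x - t)) y
       = fact j / ffac (x - y) (Suc j) * (\<Sum>k=0..j. fdiff_pow k g y / fact k * ffac (x - y) k)"
  using assms
proof (induction j arbitrary: y)
  case 0
  then show ?case by (simp add: ffac_Suc)
next
  case (Suc j)
  define S where "S \<equiv> \<lambda>j z. (\<Sum>k=0..j. fdiff_pow k g z / fact k * ffac (x - z) k)"
  have f2: "ffac (x - y) (Suc (Suc j)) = (x - y) * ffac (x - (y + 1)) (Suc j)"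
    by (simp add: ffac_Suc'[of _ "Suc j"] algebra_simps)
  have f3: "ffac (x - y) (Suc (Suc j)) = ffac (x - y) (Suc j) * (x - y - real (Suc j))"
    by (simp add: ffac_Suc[of _ "Suc j"])
  have n1: "ffac (x - y) (Suc j) \<noteq> 0" using Suc.prems f3 by auto
  have n2: "ffac (x - (y+1)) (Suc j) \<noteq> 0" using Suc.prems f2 by auto
  have IH1: "fdiff_pow j (\<lambda>t. g t / (x - t)) y = fact j / ffac (x - y) (Suc j) * S j y"
    using Suc.IH[OF n1] by (simp add: S_def)
  have IH2: "fdiff_pow j (\<lambda>t. g t / (x - t)) (y+1) = fact j / ffac (x - (y+1)) (Suc j) * S j (y+1)"
    using Suc.IH[OF n2] by (simp add: S_def)
  have K: "(x - y) * S j (y+1) - (x - y - real j - 1) * S j y = (real j + 1) * S (Suc j) y"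
    unfolding S_def by (rule key_quot)
  have "fdiff_pow (Suc j) (\<lambda>t. g t / (x - t)) y
      = fact j * S j (y+1) / ffac (x - (y+1)) (Suc j) - fact j * S j y / ffac (x - y) (Suc j)"
    using IH1 IH2 fdiff_pow_Suc[of j "\<lambda>t. g t / (x - t)" y] by simp
  also have "\<dots> = fact j * ((real j + 1) * S (Suc j) y) / ffac (x - y) (Suc (Suc j))"
    by (rule quot_alg[OF f2 _ Suc.prems K]) (simp add: f3 algebra_simps)
  also have "\<dots> = fact (Suc j) / ffac (x - y) (Suc (Suc j)) * S (Suc j) y"
    by (simp add: algebra_simps)
  finally show ?case by (simp add: S_def)
qed


definition cf :: "nat \<Rightarrow> real \<Rightarrow> nat \<Rightarrow> nat \<Rightarrow> real" where
  "cf N p n k = p ^ n * pochhammer (- real N) n *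
     (pochhammer (- real n) k / (pochhammer (- real N) k * fact k) * (1 / p) ^ k)"

lemma krav_cf: "krav N p n x = (\<Sum>k=0..n. cf N p n k * pochhammer (- x) k)"
  unfolding krav_def cf_def by (simp add: sum_distrib_left mult_ac)

lemma cf_zero: "n < k \<Longrightarrow> cf N p n k = 0"
  unfolding cf_def using pochhammer_of_nat_eq_0_lemma[of n k, where 'a=real] by simp

lemma krav_cf_ext: "n \<le> M \<Longrightarrow> krav N p n x = (\<Sum>k=0..M. cf N p n k * pochhammer (- x) k)"
  unfolding krav_cf by (rule sum.mono_neutral_left) (auto simp: cf_zero)

lemma cf_rec_Suc:
  assumes p: "p \<noteq> 0" and iN: "Suc i \<le> N" and m: "m = Suc m'"
  shows "cf N p (Suc m) (Suc i) = real (Suc i) * cf N p m (Suc i) - cf N p m i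
           - alpha_c N p m * cf N p m (Suc i) - beta_c N p m * cf N p m' (Suc i)"
proof -
  define u where "u = pochhammer (-real m) i"
  define W where "W = pochhammer (-real N) m'"
  define V where "V = pochhammer (-real N) i"
  define Q where "Q = (1/p)^i"
  define P where "P = p ^ m'"
  define F where "F = (fact i :: real)"
  have V0: "V \<noteq> 0" unfolding V_def pochhammer_eq_0_iff using iN by auto
  have iN': "- real N + real i \<noteq> 0" "real i - real N \<noteq> 0" "real N - real i \<noteq> 0"
     "real i + 1 \<noteq> 0" "1 + real i \<noteq> 0" using iN by auto
  have F0: "F \<noteq> 0" unfolding F_def by simp
  have Q0: "Q \<noteq> 0" unfolding Q_def using p by simp
  have m0: "real m \<noteq> 0" using m by simp
  have e1: "pochhammer (-real m) (Suc i) = u * (-real m + real i)"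
    unfolding u_def by (simp add: pochhammer_Suc)
  have e2: "pochhammer (-real (Suc m)) (Suc i) = (-real m - 1) * u"
    unfolding u_def by (simp add: pochhammer_rec)
  have "(- real m) * pochhammer (- real m + 1) (Suc i) = pochhammer (-real m) (Suc i) * (- real m + real i + 1)"
    using pochhammer_rec[of "- real m" "Suc i"] pochhammer_Suc[of "- real m" "Suc i"] by (simp add: algebra_simps)
  moreover have h1: "- real m + 1 = - real m'" using m by simp
  ultimately have "(- real m) * pochhammer (- real m') (Suc i) = u * (-real m + real i) * (- real m + real i + 1)"
    using e1 by simp
  then have e3: "pochhammer (-real m') (Suc i) = u * (-real m + real i) * (-real m + real i + 1) / (-real m)"
  proof -
    have neg0: "- real m \<noteq> 0" using m0 by simp
    show ?thesis by (subst nonzero_eq_divide_eq[OF neg0]) (metis \<open>- real m * pochhammer (- real m') (Suc i) = _\<close> mult.commute)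
  qed
  have e4: "pochhammer (-real N) (Suc m) = W * (-real N + real m') * (-real N + real m)"
    unfolding W_def m by (simp add: pochhammer_Suc)
  have e5: "pochhammer (-real N) m = W * (-real N + real m')"
    unfolding W_def m by (simp add: pochhammer_Suc)
  have e6: "pochhammer (-real N) (Suc i) = V * (-real N + real i)"
    unfolding V_def by (simp add: pochhammer_Suc)
  have e7: "(1/p)^(Suc i) = Q / p" unfolding Q_def by simp
  have e8: "p ^ Suc m = p * p * P" "p ^ m = p * P" unfolding P_def m by simp_all
  have e9: "fact (Suc i) = (real i + 1) * F" unfolding F_def by simp
  have rm: "real m = real m' + 1" using m by simp
  define D where "D = V * (-real N + real i) * ((real i + 1) * F)"
  have D0: "D \<noteq> 0" unfolding D_def using V0 iN' F0 by simp
  have Dd: "V * (-real N + real i) * ((real i + 1) * F) = D" unfolding D_def ..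
  have c1: "cf N p (Suc m) (Suc i) = (p*P*W*(-real N+real m')*(-real N+real m)*(-real m-1)*u*Q) / D"
    unfolding cf_def e2 e4 e6 e7 e8 e9 u_def[symmetric] W_def[symmetric] V_def[symmetric] F_def[symmetric] Dd
    using p D0 by (simp add: field_simps)
  have c2: "cf N p m (Suc i) = (P*W*(-real N+real m')*u*(-real m+real i)*Q) / D"
    unfolding cf_def e1 e5 e6 e7 e8 e9 u_def[symmetric] W_def[symmetric] V_def[symmetric] F_def[symmetric] Dd
    using p D0 by (simp add: field_simps)
  have c3a: "cf N p m i = (p*P*W*(-real N+real m')*u*Q) / (V*F)"
    unfolding cf_def e5 e8 u_def[symmetric] W_def[symmetric] V_def[symmetric] F_def[symmetric] Q_def[symmetric]
    by (simp add: field_simps)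
  have cancel3: "\<And>A d e. d \<noteq> 0 \<Longrightarrow> e \<noteq> 0 \<Longrightarrow> (A*d*e)/(V*d*(e*F)) = A/(V*F)"
    by simp
  have c3: "cf N p m i = (p*P*W*(-real N+real m')*u*Q*(-real N+real i)*(real i+1)) / D"
    unfolding c3a D_def by (rule cancel3[symmetric]) (use iN' in auto)
  have c4: "beta_c N p m * cf N p m' (Suc i) = (-(1-p)*(real N - real m + 1)*P*W*u*(-real m+real i)*(-real m+real i+1)*Q) / D"
    unfolding cf_def beta_c_def e3 e6 e7 e9 u_def[symmetric] W_def[symmetric] V_def[symmetric] F_def[symmetric] P_def[symmetric] Dd
    using p m0 D0 by (simp add: field_simps)
  have alg: "p*P*W*(-real N+real m')*(-real N+real m)*(-real m-1)*u*Q
     = real (Suc i) * (P*W*(-real N+real m')*u*(-real m+real i)*Q) - (p*P*W*(-real N+real m')*u*Q*(-real N+real i)*(real i+1))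
       - alpha_c N p m * (P*W*(-real N+real m')*u*(-real m+real i)*Q)
       - (-(1-p)*(real N - real m + 1)*P*W*u*(-real m+real i)*(-real m+real i+1)*Q)"
    unfolding alpha_c_def rm of_nat_Suc by algebra
  show ?thesis
    unfolding c1 c2 c3 c4 alg using D0 by (simp add: field_simps)
qed


lemma cf_rec_0:
  assumes p: "p \<noteq> 0" and m: "m = Suc m'"
  shows "cf N p (Suc m) 0 = - alpha_c N p m * cf N p m 0 - beta_c N p m * cf N p m' 0"
proof -
  define W where "W = pochhammer (-real N) m'"
  define P where "P = p ^ m'"
  have e4: "pochhammer (-real N) (Suc m) = W * (-real N + real m') * (-real N + real m)"
    unfolding W_def m by (simp add: pochhammer_Suc)
  have e5: "pochhammer (-real N) m = W * (-real N + real m')"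
    unfolding W_def m by (simp add: pochhammer_Suc)
  have e8: "p ^ Suc m = p * p * P" "p ^ m = p * P" unfolding P_def m by simp_all
  have rm: "real m = real m' + 1" using m by simp
  show ?thesis
    unfolding cf_def e4 e5 e8 alpha_c_def beta_c_def W_def[symmetric] P_def[symmetric]
    by (simp add: rm) algebra
qed

lemma cf_top:
  assumes "m \<le> N"
  shows "cf N p m (Suc N) = 0"
proof -
  have "pochhammer (- real N) (Suc N) = 0" unfolding pochhammer_eq_0_iff by auto
  then show ?thesis unfolding cf_def by simp
qed

lemma cf_rec:
  assumes p: "p \<noteq> 0" and m1: "1 \<le> m" and mN: "Suc m \<le> N" and k: "k \<le> Suc (Suc m)"
  shows "cf N p (Suc m) k = real k * cf N p m k - (if k = 0 then 0 else cf N p m (k - 1))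
           - alpha_c N p m * cf N p m k - beta_c N p m * cf N p (m - 1) k"
proof -
  obtain m' where m: "m = Suc m'" using m1 by (cases m) auto
  show ?thesis
  proof (cases k)
    case 0
    then show ?thesis using cf_rec_0[OF p m] m by simp
  next
    case (Suc i)
    show ?thesis
    proof (cases "Suc i \<le> N")
      case True
      then show ?thesis using cf_rec_Suc[OF p True m] Suc m by simp
    next
      case False
      then have iN: "i = N" using k Suc mN by auto
      have "cf N p m N = 0" using mN by (intro cf_zero) auto
      then show ?thesis using Suc iN cf_top[of "Suc m" N p] cf_top[of m N p] cf_top[of "m - 1" N p] mN
        by simp
    qed
  qed
qed

lemma krav_rec:
  assumes p: "p \<noteq> 0" and m1: "1 \<le> m" and mN: "Suc m \<le> N"
  shows "krav N p (Suc m) x = (x - alpha_c N p m) * krav N p m x - beta_c N p m * krav N p (m - 1) x"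
proof -
  define M where "M = Suc (Suc m)"
  define P where "P = (\<lambda>k. pochhammer (- x) k)"
  define bb where "bb = (\<lambda>k. if k = 0 then 0 else cf N p m (k - 1))"
  have xP: "\<And>k. x * P k = real k * P k - P (Suc k)"
    unfolding P_def by (simp add: pochhammer_Suc algebra_simps)
  have PS: "\<And>k. P (Suc k) = real k * P k - x * P k"
    unfolding P_def by (simp add: pochhammer_Suc algebra_simps)
  have K1: "krav N p (Suc m) x = (\<Sum>k=0..M. cf N p (Suc m) k * P k)"
    unfolding P_def by (rule krav_cf_ext) (simp add: M_def)
  have K2: "krav N p m x = (\<Sum>k=0..M. cf N p m k * P k)"
    unfolding P_def by (rule krav_cf_ext) (simp add: M_def)
  have K3: "krav N p (m - 1) x = (\<Sum>k=0..M. cf N p (m - 1) k * P k)"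
    unfolding P_def by (rule krav_cf_ext) (simp add: M_def)
  have S1: "(\<Sum>k=0..M. bb k * P k) = (\<Sum>k=0..M. cf N p m k * P (Suc k))"
  proof -
    have "(\<Sum>k=0..M. bb k * P k) = (\<Sum>k=0..Suc m. cf N p m k * P (Suc k))"
      unfolding M_def by (subst sum.atLeast0_atMost_Suc_shift) (simp add: bb_def)
    also have "\<dots> = (\<Sum>k=0..M. cf N p m k * P (Suc k))"
      unfolding M_def using cf_zero[of m "Suc (Suc m)" N p] by simp
    finally show ?thesis .
  qed
  have XK: "x * krav N p m x = (\<Sum>k=0..M. real k * cf N p m k * P k) - (\<Sum>k=0..M. bb k * P k)"
    unfolding K2 S1 sum_distrib_left sum_subtractf[symmetric]
    by (rule sum.cong) (simp_all add: PS algebra_simps)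
  have "krav N p (Suc m) x = (\<Sum>k=0..M. (real k * cf N p m k - bb k
           - alpha_c N p m * cf N p m k - beta_c N p m * cf N p (m - 1) k) * P k)"
    unfolding K1 bb_def by (rule sum.cong) (use cf_rec[OF p m1 mN] in \<open>auto simp: M_def\<close>)
  also have "\<dots> = x * krav N p m x - alpha_c N p m * krav N p m x - beta_c N p m * krav N p (m - 1) x"
    unfolding XK unfolding K2 K3 sum_distrib_left sum_subtractf[symmetric]
    by (rule sum.cong) (simp_all add: algebra_simps)
  finally show ?thesis by (simp add: algebra_simps)
qed


definition pP :: "nat \<Rightarrow> real poly" where "pP k = (\<Prod>i<k. [:real i, -1:])"

lemma poly_pP: "poly (pP k) x = pochhammer (-x) k"
  by (simp add: pP_def poly_prod pochhammer_prod atLeast0LessThan)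

lemma degree_pP: "degree (pP k) = k"
  unfolding pP_def by (subst degree_prod_eq_sum_degree) auto

lemma lead_pP: "coeff (pP k) k = (-1)^k"
proof -
  have "lead_coeff (pP k) = (\<Prod>i<k. lead_coeff [:real i, -1:])"
    unfolding pP_def by (rule lead_coeff_prod)
  then show ?thesis by (simp add: degree_pP)
qed

definition kp :: "nat \<Rightarrow> real \<Rightarrow> nat \<Rightarrow> real poly" where
  "kp N p n = (\<Sum>i=0..n. smult (cf N p n i) (pP i))"

lemma poly_kp: "poly (kp N p n) x = krav N p n x"
  unfolding kp_def krav_cf by (simp add: poly_sum poly_pP)

lemma poly_kp_fun: "poly (kp N p n) = krav N p n"
  by (rule ext) (rule poly_kp)

lemma degree_kp_le: "degree (kp N p n) \<le> n"
  unfolding kp_def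
  by (rule degree_sum_le) (auto intro: order.trans[OF degree_smult_le] simp: degree_pP)

lemma cf_diag:
  assumes "n \<le> N" "p \<noteq> 0"
  shows "cf N p n n = (-1)^n"
proof -
  have "pochhammer (- real N) n \<noteq> 0" unfolding pochhammer_eq_0_iff using assms by auto
  moreover have "pochhammer (- real n) n = (-1)^n * fact n"
    using pochhammer_minus[of "real n" n] by (simp add: pochhammer_fact)
  ultimately show ?thesis unfolding cf_def using assms(2) by (simp add: field_simps power_one_over)
qed

lemma coeff_kp_top:
  assumes "n \<le> N" "p \<noteq> 0"
  shows "coeff (kp N p n) n = 1"
proof -
  have "coeff (kp N p n) n = (\<Sum>i=0..n. cf N p n i * coeff (pP i) n)"
    unfolding kp_def by (simp add: coeff_sum)
  also have "\<dots> = (\<Sum>i\<in>{n}. cf N p n i * coeff (pP i) n)"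
  proof (rule sum.mono_neutral_right)
    show "\<forall>i\<in>{0..n} - {n}. cf N p n i * coeff (pP i) n = 0"
      by (auto intro!: coeff_eq_0 simp: degree_pP)
  qed auto
  also have "\<dots> = cf N p n n * coeff (pP n) n" by simp
  also have "\<dots> = 1" using cf_diag[OF assms] lead_pP[of n]
    by (simp flip: power_mult_distrib)
  finally show ?thesis .
qed

lemma degree_kp: "n \<le> N \<Longrightarrow> p \<noteq> 0 \<Longrightarrow> degree (kp N p n) = n"
  using degree_kp_le[of N p n] coeff_kp_top[of n N p]
  by (metis le_antisym le_degree zero_neq_one)

lemma lead_kp: "n \<le> N \<Longrightarrow> p \<noteq> 0 \<Longrightarrow> lead_coeff (kp N p n) = 1"
  using degree_kp coeff_kp_top by simp


lemma ffac_nat_zero: "x < k \<Longrightarrow> ffac (real x) k = 0"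
  unfolding ffac_def by (rule prod_zero) (auto intro!: bexI[of _ x])

lemma ffac_nat: "k \<le> x \<Longrightarrow> ffac (real x) k = fact x / fact (x - k)"
proof (induction k)
  case 0 then show ?case by simp
next
  case (Suc k)
  have xk: "x - k = Suc (x - Suc k)" using Suc.prems by simp
  have e: "fact (x - k) = (real x - real k) * (fact (x - Suc k) :: real)"
    unfolding xk fact_Suc using Suc.prems by (simp add: of_nat_diff)
  have nz: "real x - real k \<noteq> 0" using Suc.prems by simp
  show ?case unfolding ffac_Suc Suc.IH[OF Suc_leD[OF Suc.prems]] e using nz by (simp add: field_simps)
qed

lemma ffac_add: "ffac z (a + b) = ffac z a * ffac (z - real a) b"
  by (induction b) (simp_all add: ffac_Suc algebra_simps)

lemma poch_neg_ffac: "pochhammer (- z) k = (-1)^k * ffac z k"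
  by (induction k) (simp_all add: pochhammer_Suc ffac_Suc algebra_simps)

lemma ffac_choose: "k \<le> n \<Longrightarrow> ffac (real n) k / fact k = real (n choose k)"
  by (simp add: ffac_nat binomial_fact field_simps)


lemma moment:
  fixes N k m :: nat and p :: real
  shows "(\<Sum>x=0..N. bweight N p x * ffac (real x) k * ffac (real N - real x) m)
         = ffac (real N) (k + m) * p^k * (1-p)^m"
proof (cases "N < k + m")
  case True
  have "ffac (real N) (k + m) = 0" using True by (rule ffac_nat_zero)
  moreover have "bweight N p x * ffac (real x) k * ffac (real N - real x) m = 0" if "x \<in> {0..N}" for x
  proof (cases "x < k")
    case True then show ?thesis by (simp add: ffac_nat_zero)
  next
    case False
    then have "N - x < m" using \<open>N < k + m\<close> that by auto
    moreover have "real N - real x = real (N - x)" using that by (simp add: of_nat_diff)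
    ultimately have "ffac (real N - real x) m = 0" by (metis ffac_nat_zero)
    then show ?thesis by simp
  qed
  ultimately show ?thesis by (simp add: sum.neutral)
next
  case False
  define M where "M = N - (k + m)"
  have NM: "N = M + k + m" using False by (simp add: M_def)
  define t where "t = (\<lambda>x. bweight N p x * ffac (real x) k * ffac (real N - real x) m)"
  have "(\<Sum>x=0..N. t x) = (\<Sum>x\<in>{0+k..M+k}. t x)"
  proof (rule sum.mono_neutral_right)
    show "\<forall>x\<in>{0..N} - {0+k..M+k}. t x = 0"
    proof
      fix x assume x: "x \<in> {0..N} - {0+k..M+k}"
      show "t x = 0"
      proof (cases "x < k")
        case True then show ?thesis by (simp add: t_def ffac_nat_zero)
      next
        case False
        then have "N - x < m" using x NM by auto
        moreover have "real N - real x = real (N - x)" using x by (simp add: of_nat_diff)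
        ultimately have "ffac (real N - real x) m = 0" by (metis ffac_nat_zero)
        then show ?thesis by (simp add: t_def)
      qed
    qed
  qed (auto simp: NM)
  also have "\<dots> = (\<Sum>y=0..M. t (y + k))" by (rule sum.shift_bounds_cl_nat_ivl)
  also have "\<dots> = (\<Sum>y=0..M. (fact N / fact M) * p^k * (1-p)^m * (real (M choose y) * p^y * (1-p)^(M-y)))"
  proof (rule sum.cong)
    fix y assume y: "y \<in> {0..M}"
    then have yM: "y \<le> M" by simp
    define a where "a = N - (y + k)"
    have a: "a = (M - y) + m" using yM NM by (simp add: a_def)
    have ra: "real N - real (y + k) = real a" using yM NM by (simp add: a_def of_nat_diff)
    have f1: "ffac (real (y + k)) k = fact (y + k) / fact y" by (subst ffac_nat) auto
    have f2: "ffac (real a) m = fact a / fact (M - y)" by (subst ffac_nat) (auto simp: a)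
    have b1: "real (N choose (y + k)) = fact N / (fact (y + k) * fact a)"
      using yM NM by (subst binomial_fact) (auto simp: a_def)
    have b2: "real (M choose y) = fact M / (fact y * fact (M - y))"
      using yM by (subst binomial_fact) auto
    have pw: "(1-p)^(N - (y+k)) = (1-p)^(M-y) * (1-p)^m"
      unfolding a_def[symmetric] a by (simp add: power_add)
    show "t (y + k) = (fact N / fact M) * p^k * (1-p)^m * (real (M choose y) * p^y * (1-p)^(M-y))"
      unfolding t_def bweight_def ra f1 f2 b1 b2 pw by (simp add: power_add)
  qed simp
  also have "\<dots> = (fact N / fact M) * p^k * (1-p)^m * (\<Sum>y=0..M. real (M choose y) * p^y * (1-p)^(M-y))"
    by (simp add: sum_distrib_left)
  also have "(\<Sum>y=0..M. real (M choose y) * p^y * (1-p)^(M-y)) = 1"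
    using binomial_ring[of p "1-p" M] by (simp add: atLeast0AtMost)
  also have "ffac (real N) (k + m) = fact N / fact M"
    by (subst ffac_nat) (auto simp: NM)
  ultimately show ?thesis unfolding t_def by simp
qed


lemma alt_pascal:
  fixes f :: "nat \<Rightarrow> real"
  shows "(\<Sum>k=0..Suc n. (-1)^k * real (Suc n choose k) * f k)
       = (\<Sum>k=0..n. (-1)^k * real (n choose k) * (f k - f (Suc k)))"
proof -
  have A: "(\<Sum>k=0..Suc n. (-1)^k * real (Suc n choose k) * f k)
     = f 0 + (\<Sum>k=0..n. (-1)^Suc k * real (n choose k) * f (Suc k))
           + (\<Sum>k=0..n. (-1)^Suc k * real (n choose Suc k) * f (Suc k))"
    by (subst sum.atLeast0_atMost_Suc_shift) (simp add: algebra_simps flip: sum.distrib)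
  have B: "(\<Sum>k=0..n. (-1)^Suc k * real (n choose Suc k) * f (Suc k))
         = (\<Sum>k=0..n. (-1)^k * real (n choose k) * f k) - f 0"
  proof -
    have "(\<Sum>k=0..Suc n. (-1)^k * real (n choose k) * f k)
        = f 0 + (\<Sum>k=0..n. (-1)^Suc k * real (n choose Suc k) * f (Suc k))"
      by (subst sum.atLeast0_atMost_Suc_shift) simp
    moreover have "(\<Sum>k=0..Suc n. (-1)^k * real (n choose k) * f k)
        = (\<Sum>k=0..n. (-1)^k * real (n choose k) * f k)"
      by simp
    ultimately show ?thesis by simp
  qed
  show ?thesis unfolding A B
    by (simp add: sum_subtractf right_diff_distrib sum.distrib algebra_simps sum_negf)
qed

lemma alt_ffac:
  "m < n \<Longrightarrow> (\<Sum>k=0..n. (-1)^k * real (n choose k) * ffac (z - real k) m) = 0"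
proof (induction n arbitrary: z m)
  case 0 then show ?case by simp
next
  case (Suc n)
  have "(\<Sum>k=0..Suc n. (-1)^k * real (Suc n choose k) * ffac (z - real k) m)
      = (\<Sum>k=0..n. (-1)^k * real (n choose k) * (ffac (z - real k) m - ffac (z - real (Suc k)) m))"
    by (rule alt_pascal)
  also have "\<dots> = 0"
  proof (cases m)
    case 0 then show ?thesis by simp
  next
    case (Suc m')
    have d: "ffac (z - real k) m - ffac (z - real (Suc k)) m = real m * ffac ((z - 1) - real k) m'" for k
    proof -
      have e1: "z - real k - 1 = (z - 1) - real k" "z - real (Suc k) = (z - 1) - real k" by simp_all
      have d1: "ffac (z - real k) (Suc m') = (z - real k) * ffac ((z-1) - real k) m'"
        using ffac_Suc'[of "z - real k" m'] unfolding e1 .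
      have d2: "ffac (z - real (Suc k)) (Suc m') = ffac ((z-1) - real k) m' * ((z-1) - real k - real m')"
        using ffac_Suc[of "z - real (Suc k)" m'] unfolding e1 .
      have g: "\<And>G. (z - real k) * G - G * ((z-1) - real k - real m') = real (Suc m') * G"
        by (simp add: algebra_simps)
      show ?thesis unfolding Suc d1 d2 g ..
    qed
    have "(\<Sum>k=0..n. (-1)^k * real (n choose k) * ffac ((z - 1) - real k) m') = 0"
      using Suc.IH[of m' "z - 1"] Suc.prems Suc by simp
    then show ?thesis unfolding d
      by (simp add: sum_distrib_left[symmetric] mult.assoc[symmetric] mult.commute[of "real m"]
          flip: sum_distrib_right)
  qed
  finally show ?case .
qed


lemma cf_term:
  assumes "k \<le> n" "n \<le> N" "p \<noteq> 0"
  shows "cf N p n k * (-1)^k * ffac (real N) (k + m) * p^k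
       = p^n * pochhammer (- real N) n * ((-1)^k * real (n choose k) * ffac (real N - real k) m)"
proof -
  have fN: "ffac (real N) k \<noteq> 0" using assms by (simp add: ffac_nat)
  have c: "real (n choose k) = ffac (real n) k / fact k" using ffac_choose[OF assms(1)] by simp
  have s: "((-1::real)^k)^2 = 1" by (simp flip: power_mult)
  show ?thesis
    unfolding cf_def poch_neg_ffac ffac_add c using fN assms(3)
    by (simp add: field_simps power_one_over)
qed

lemma orth_basis:
  assumes "n \<le> N" "p \<noteq> 0" "m < n"
  shows "(\<Sum>x=0..N. krav N p n (real x) * ffac (real N - real x) m * bweight N p x) = 0"
proof -
  have "(\<Sum>x=0..N. krav N p n (real x) * ffac (real N - real x) m * bweight N p x)
      = (\<Sum>x=0..N. \<Sum>k=0..n. cf N p n k * (-1)^k * (bweight N p x * ffac (real x) k * ffac (real N - real x) m))"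
    unfolding krav_cf poch_neg_ffac sum_distrib_right by (simp add: mult_ac)
  also have "\<dots> = (\<Sum>k=0..n. cf N p n k * (-1)^k * (\<Sum>x=0..N. bweight N p x * ffac (real x) k * ffac (real N - real x) m))"
    by (subst sum.swap) (simp add: sum_distrib_left)
  also have "\<dots> = (\<Sum>k=0..n. cf N p n k * (-1)^k * ffac (real N) (k + m) * p^k * (1-p)^m)"
    unfolding moment by (simp add: mult_ac)
  also have "\<dots> = (\<Sum>k=0..n. p^n * pochhammer (- real N) n * (1-p)^m * ((-1)^k * real (n choose k) * ffac (real N - real k) m))"
    by (rule sum.cong) (use cf_term assms in \<open>auto simp: mult_ac\<close>)
  also have "\<dots> = 0"
    unfolding sum_distrib_left[symmetric] using alt_ffac[OF assms(3)] by simp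
  finally show ?thesis .
qed


lemma span_zero:
  fixes F :: "real poly \<Rightarrow> real" and B :: "nat \<Rightarrow> real poly"
  assumes add: "\<And>a b. F (a + b) = F a + F b" and sm: "\<And>c a. F (smult c a) = c * F a"
    and degB: "\<And>k. k < n \<Longrightarrow> degree (B k) = k"
    and leadB: "\<And>k. k < n \<Longrightarrow> lead_coeff (B k) \<noteq> 0"
    and zero: "\<And>k. k < n \<Longrightarrow> F (B k) = 0"
  shows "degree q < n \<Longrightarrow> F q = 0"
proof (induction "degree q" arbitrary: q rule: less_induct)
  case less
  have F0: "F 0 = 0" using sm[of 0 0] by simp
  show ?case
  proof (cases "q = 0")
    case True then show ?thesis using F0 by simp
  next
    case False
    define d where "d = degree q"
    define c where "c = lead_coeff q / lead_coeff (B d)"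
    define q' where "q' = q - smult c (B d)"
    have dn: "d < n" using less.prems d_def by simp
    have q: "q = q' + smult c (B d)" unfolding q'_def by simp
    have degq': "degree q' \<le> d"
      unfolding q'_def d_def using degB[OF dn] d_def
      by (intro order.trans[OF degree_diff_le]) (auto intro: order.trans[OF degree_smult_le])
    have cq': "coeff q' d = 0"
      unfolding q'_def c_def d_def using leadB[OF dn[unfolded d_def]] degB[OF dn[unfolded d_def]]
      by simp
    have Fq': "F q' = 0"
    proof (cases "q' = 0")
      case True then show ?thesis using F0 by simp
    next
      case False
      then have "degree q' \<noteq> d" using cq' by (metis leading_coeff_0_iff)
      then have "degree q' < degree q" using degq' d_def by simp
      then show ?thesis using less.hyps[of q'] less.prems by simp
    qed
    have "F q = F q' + c * F (B d)" using q add sm by simp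
    then show ?thesis using Fq' zero[OF dn] by simp
  qed
qed

definition bB :: "nat \<Rightarrow> nat \<Rightarrow> real poly" where
  "bB N m = (\<Prod>i<m. [:real N - real i, -1:])"

lemma poly_bB: "poly (bB N m) x = ffac (real N - x) m"
  by (simp add: bB_def poly_prod ffac_def algebra_simps)

lemma degree_bB: "degree (bB N m) = m"
  unfolding bB_def by (subst degree_prod_eq_sum_degree) auto

lemma lead_bB: "lead_coeff (bB N m) \<noteq> 0"
proof -
  have "lead_coeff (bB N m) = (\<Prod>i<m. lead_coeff [:real N - real i, -1:])"
    unfolding bB_def by (rule lead_coeff_prod)
  then show ?thesis by simp
qed

lemma orth_poly:
  assumes "n \<le> N" "p \<noteq> 0" "degree q < n"
  shows "(\<Sum>x=0..N. krav N p n (real x) * poly q (real x) * bweight N p x) = 0"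
proof -
  define F where "F = (\<lambda>q. \<Sum>x=0..N. krav N p n (real x) * poly q (real x) * bweight N p x)"
  have "F q = 0"
  proof (rule span_zero[where B="bB N" and n=n])
    show "F (a + b) = F a + F b" for a b
      unfolding F_def by (simp add: algebra_simps sum.distrib)
    show "F (smult c a) = c * F a" for c a
      unfolding F_def by (simp add: sum_distrib_left mult_ac)
    show "F (bB N k) = 0" if "k < n" for k
      unfolding F_def poly_bB using orth_basis[OF assms(1,2) that] .
  qed (use assms degree_bB lead_bB in auto)
  then show ?thesis unfolding F_def .
qed

lemma bweight_pos: "0 < p \<Longrightarrow> p < 1 \<Longrightarrow> x \<le> N \<Longrightarrow> 0 < bweight N p x"
  unfolding bweight_def by simp

lemma sq_sum_pos:
  assumes p: "0 < p" "p < 1" and q: "q \<noteq> 0" "degree q \<le> N"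
  shows "0 < (\<Sum>x=0..N. (poly q (real x))^2 * bweight N p x)"
proof -
  have "\<exists>x\<in>{0..N}. poly q (real x) \<noteq> 0"
  proof (rule ccontr)
    assume "\<not> ?thesis"
    then have sub: "real ` {0..N} \<subseteq> {x. poly q x = 0}" by auto
    have "card (real ` {0..N}) = N + 1" by (simp add: card_image)
    also have "\<dots> \<le> card {x. poly q x = 0}"
      using card_mono[OF poly_roots_finite[OF q(1)] sub] \<open>card (real ` {0..N}) = N + 1\<close> by simp
    also have "\<dots> \<le> degree q" by (rule card_poly_roots_bound[OF q(1)])
    finally show False using q(2) by (simp add: card_image)
  qed
  then obtain x where x: "x \<in> {0..N}" "poly q (real x) \<noteq> 0" by blast
  show ?thesis
  proof (rule sum_pos2[OF _ x(1)])
    show "0 < (poly q (real x))\<^sup>2 * bweight N p x" using x bweight_pos[OF p, of x N] by simp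
    show "0 \<le> (poly q (real i))\<^sup>2 * bweight N p i" if "i \<in> {0..N}" for i
      using that bweight_pos[OF p, of i N] by simp
  qed simp
qed

lemma nrm_pos:
  assumes "0 < p" "p < 1" "k \<le> N"
  shows "0 < krav_nrm N p k"
proof -
  have "kp N p k \<noteq> 0" using lead_kp[of k N p] assms by auto
  then show ?thesis
    unfolding krav_nrm_def poly_kp[symmetric]
    by (rule sq_sum_pos[OF assms(1,2)]) (use degree_kp assms in auto)
qed

lemma orth_krav:
  assumes "p \<noteq> 0" "k \<le> N" "l \<le> N" "k \<noteq> l"
  shows "(\<Sum>x=0..N. krav N p k (real x) * krav N p l (real x) * bweight N p x) = 0"
proof (cases "l < k")
  case True
  then show ?thesis using orth_poly[of k N p "kp N p l"] degree_kp[of l N p] assms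
    by (simp add: poly_kp)
next
  case False
  then have "k < l" using assms by simp
  then show ?thesis using orth_poly[of l N p "kp N p k"] degree_kp[of k N p] assms
    by (simp add: poly_kp mult_ac)
qed


lemma krav_0: "krav N p 0 x = 1"
  by (simp add: krav_def)

lemma krav_1: "0 < N \<Longrightarrow> p \<noteq> 0 \<Longrightarrow> krav N p 1 x = x - alpha_c N p 0"
  by (simp add: krav_def alpha_c_def field_simps)

abbreviation ipk where "ipk N p f g \<equiv> (\<Sum>i=0..N. f (real i) * g (real i) * bweight N p i)"

lemma beta_nrm:
  assumes p: "0 < p" "p < 1" and n: "1 \<le> n" "Suc n \<le> N"
  shows "beta_c N p n * krav_nrm N p (n - 1) = krav_nrm N p n"
proof -
  have p0: "p \<noteq> 0" using p by simp
  define K where "K = krav N p"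
  have h: "\<And>k. krav_nrm N p k = ipk N p (K k) (K k)"
    unfolding krav_nrm_def K_def by (simp add: power2_eq_square)
  have o: "\<And>k l. k \<le> N \<Longrightarrow> l \<le> N \<Longrightarrow> k \<noteq> l \<Longrightarrow> ipk N p (K k) (K l) = 0"
    unfolding K_def by (rule orth_krav[OF p0])
  have rec: "K (Suc n) t = (t - alpha_c N p n) * K n t - beta_c N p n * K (n - 1) t" for t
    unfolding K_def by (rule krav_rec[OF p0 n])
  have S: "ipk N p (K n) (\<lambda>t. t * K (n - 1) t) = ipk N p (K n) (K n)"
  proof (cases "n = 1")
    case True
    have e: "t * K (n-1) t = K n t + alpha_c N p 0 * K (n - 1) t" for t
      unfolding K_def True using krav_1[of N p t] n p0 by (simp add: krav_0)
    have "ipk N p (K n) (\<lambda>t. t * K (n - 1) t) = ipk N p (K n) (K n) + alpha_c N p 0 * ipk N p (K n) (K (n - 1))"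
      by (simp only: e) (simp add: algebra_simps sum.distrib sum_distrib_left)
    then show ?thesis using o[of n "n - 1"] n by simp
  next
    case False
    then have n2: "1 \<le> n - 1" "Suc (n - 1) \<le> N" using n by auto
    have e: "t * K (n - 1) t = K n t + alpha_c N p (n - 1) * K (n - 1) t + beta_c N p (n - 1) * K (n - 1 - 1) t" for t
      using krav_rec[OF p0 n2, of t] n2 unfolding K_def by (simp add: algebra_simps)
    then have "ipk N p (K n) (\<lambda>t. t * K (n - 1) t) = ipk N p (K n) (K n)
        + alpha_c N p (n - 1) * ipk N p (K n) (K (n - 1)) + beta_c N p (n - 1) * ipk N p (K n) (K (n - 1 - 1))"
      by (simp only: e) (simp add: algebra_simps sum.distrib sum_distrib_left)
    then show ?thesis using o[of n "n - 1"] o[of n "n - 1 - 1"] n by simp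
  qed
  have "0 = ipk N p (K (Suc n)) (K (n - 1))" using o[of "Suc n" "n - 1"] n by simp
  also have "\<dots> = ipk N p (K n) (\<lambda>t. t * K (n - 1) t) - alpha_c N p n * ipk N p (K n) (K (n - 1))
       - beta_c N p n * ipk N p (K (n - 1)) (K (n - 1))"
    unfolding rec by (simp add: algebra_simps sum_subtractf sum_distrib_left sum.distrib)
  also have "\<dots> = krav_nrm N p n - beta_c N p n * krav_nrm N p (n - 1)"
    using S o[of n "n - 1"] n unfolding h by simp
  finally show ?thesis by simp
qed


lemma CD_alg:
  fixes a b c d h0 h1 be x y al S :: real
  assumes "be * h0 = h1" "h0 > 0" "h1 > 0"
    and "(x - y) * S = (a * d - c * b) / h0"
  shows "(x - y) * (S + a * b / h1) = (((x - al) * a - be * c) * b - a * ((y - al) * b - be * d)) / h1"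
proof -
  have "(x - y) * (S + a * b / h1) = (a * d - c * b) / h0 + (x - y) * a * b / h1"
    using assms(4) by (simp add: algebra_simps)
  also have "\<dots> = (be * (a * d - c * b) + (x - y) * a * b) / h1"
  proof -
    have "be \<noteq> 0" "h0 \<noteq> 0" using assms(1-3) by auto
    then show ?thesis unfolding assms(1)[symmetric] by (simp add: field_simps)
  qed
  also have "\<dots> = (((x - al) * a - be * c) * b - a * ((y - al) * b - be * d)) / h1"
    by (simp add: algebra_simps)
  finally show ?thesis .
qed

lemma CD:
  assumes p: "0 < p" "p < 1" and n: "1 \<le> n" "n \<le> N"
  shows "(x - y) * (\<Sum>k<n. krav N p k x * krav N p k y / krav_nrm N p k)
       = (krav N p n x * krav N p (n - 1) y - krav N p (n - 1) x * krav N p n y) / krav_nrm N p (n - 1)"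
  using n
proof (induction n)
  case 0 then show ?case by simp
next
  case (Suc n)
  have p0: "p \<noteq> 0" using p by simp
  show ?case
  proof (cases "n = 0")
    case True
    have "krav_nrm N p 0 > 0" using nrm_pos[OF p, of 0] by simp
    then show ?thesis using krav_1[of N p x] krav_1[of N p y] Suc.prems p0 True
      by (simp add: krav_0 field_simps)
  next
    case False
    then have n1: "1 \<le> n" "n \<le> N" "Suc n \<le> N" using Suc.prems by auto
    have IH: "(x - y) * (\<Sum>k<n. krav N p k x * krav N p k y / krav_nrm N p k)
       = (krav N p n x * krav N p (n - 1) y - krav N p (n - 1) x * krav N p n y) / krav_nrm N p (n - 1)"
      using Suc.IH n1 by simp
    show ?thesis
      unfolding sum.lessThan_Suc diff_Suc_1 krav_rec[OF p0 n1(1) n1(3)]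
      by (rule CD_alg[OF beta_nrm[OF p n1(1) n1(3)] nrm_pos[OF p] nrm_pos[OF p] IH]) (use n1 in auto)
  qed
qed


lemma ffac_nz_factor: "ffac z (Suc j) \<noteq> 0 \<Longrightarrow> i \<le> j \<Longrightarrow> z - real i \<noteq> 0"
  unfolding ffac_def by (auto simp: less_Suc_eq_le)

lemma kker_fun: "kker N p m i l x y = fdiff_pow l (\<lambda>t. \<Sum>k<m. fdiff_pow i (krav N p k) x * krav N p k t / krav_nrm N p k) y"
proof -
  have "fdiff_pow l (\<lambda>t. \<Sum>k<m. fdiff_pow i (krav N p k) x * krav N p k t / krav_nrm N p k) y
      = (\<Sum>k<m. fdiff_pow l (\<lambda>t. (fdiff_pow i (krav N p k) x / krav_nrm N p k) * krav N p k t) y)"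
    by (subst fdiff_pow_sum[symmetric]) (simp add: mult_ac)
  also have "\<dots> = kker N p m i l x y"
    unfolding kker_def fdiff_pow_cmult by (simp add: mult_ac)
  finally show ?thesis by simp
qed

lemma kker_CD:
  assumes p: "0 < p" "p < 1" and m: "1 \<le> m" "m \<le> N" and nz: "ffac (x - y) (Suc j) \<noteq> 0"
  shows "kker N p m 0 j x y = A_fn N p j m x y * krav N p m x + B_fn N p j m x y * krav N p (m - 1) x"
proof -
  define h where "h = krav_nrm N p (m - 1)"
  define G where "G = (\<lambda>t. \<Sum>k<m. fdiff_pow 0 (krav N p k) x * krav N p k t / krav_nrm N p k)"
  define H where "H = (\<lambda>t. (krav N p m x / h) * (krav N p (m - 1) t / (x - t))
                          + (- krav N p (m - 1) x / h) * (krav N p m t / (x - t)))"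
  have "fdiff_pow j G y = fdiff_pow j H y"
  proof (rule fdiff_pow_local)
    fix i assume i: "i \<le> j"
    have xt: "x - (y + real i) \<noteq> 0" using ffac_nz_factor[OF nz i] by simp
    have "krav_nrm N p (m - 1) > 0" by (rule nrm_pos[OF p]) (use m in simp)
    then have h0: "h \<noteq> 0" unfolding h_def by simp
    have alg: "\<And>d A B C E. d \<noteq> 0 \<Longrightarrow> d * (A / h * (B / d) + (- C) / h * (E / d)) = (A * B - C * E) / h"
      using h0 by (simp add: field_simps)
    have "(x - (y + real i)) * G (y + real i) = (x - (y + real i)) * H (y + real i)"
      unfolding G_def H_def alg[OF xt] using CD[OF p m, of x "y + real i"] by (simp add: h_def)
    then show "G (y + real i) = H (y + real i)" using xt by simp
  qed
  also have "\<dots> = (krav N p m x / h) * fdiff_pow j (\<lambda>t. krav N p (m - 1) t / (x - t)) y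
                + (- krav N p (m - 1) x / h) * fdiff_pow j (\<lambda>t. krav N p m t / (x - t)) y"
    unfolding H_def by (rule fdiff_pow_lin)
  also have "\<dots> = A_fn N p j m x y * krav N p m x + B_fn N p j m x y * krav N p (m - 1) x"
    unfolding fdiff_quot[OF nz] A_fn_def B_fn_def h_def by (simp add: field_simps)
  finally show ?thesis unfolding kker_fun G_def .
qed


lemma fdiff_pow_poly_add: "fdiff_pow j (poly (a + b)) y = fdiff_pow j (poly a) y + fdiff_pow j (poly b) y"
proof -
  have "poly (a + b) = (\<lambda>t. 1 * poly a t + 1 * poly b t)" by auto
  then show ?thesis using fdiff_pow_lin[of j 1 "poly a" 1 "poly b" y] by simp
qed

lemma fdiff_pow_poly_smult: "fdiff_pow j (poly (smult c a)) y = c * fdiff_pow j (poly a) y"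
proof -
  have "poly (smult c a) = (\<lambda>t. c * poly a t)" by auto
  then show ?thesis using fdiff_pow_cmult[of j c "poly a" y] by simp
qed

lemma fdiff_pow_poly_diff: "fdiff_pow j (poly (a - b)) y = fdiff_pow j (poly a) y - fdiff_pow j (poly b) y"
proof -
  have "poly (a - b) = (\<lambda>t. 1 * poly a t + (-1) * poly b t)" by auto
  then show ?thesis using fdiff_pow_lin[of j 1 "poly a" "-1" "poly b" y] by simp
qed

lemma kker0: "kker N p m 0 j t y = (\<Sum>k<m. krav N p k t * fdiff_pow j (krav N p k) y / krav_nrm N p k)"
  unfolding kker_def by simp

lemma reproduce:
  assumes p: "0 < p" "p < 1" and m: "m \<le> N" and r: "degree r < m"
  shows "(\<Sum>i=0..N. kker N p m 0 j (real i) y * poly r (real i) * bweight N p i) = fdiff_pow j (poly r) y"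
proof -
  have p0: "p \<noteq> 0" using p by simp
  define F where "F = (\<lambda>r. (\<Sum>i=0..N. kker N p m 0 j (real i) y * poly r (real i) * bweight N p i) - fdiff_pow j (poly r) y)"
  have "F r = 0"
  proof (rule span_zero[where B="kp N p" and n=m, OF _ _ _ _ _ r])
    show "F (a + b) = F a + F b" for a b
      unfolding F_def fdiff_pow_poly_add by (simp add: algebra_simps sum.distrib)
    show "F (smult c a) = c * F a" for c a
      unfolding F_def fdiff_pow_poly_smult by (simp add: algebra_simps sum_distrib_left)
    show "degree (kp N p k) = k" if "k < m" for k using degree_kp[of k N p] that m p0 by simp
    show "lead_coeff (kp N p k) \<noteq> 0" if "k < m" for k using lead_kp[of k N p] that m p0 by simp
    show "F (kp N p l) = 0" if l: "l < m" for l
    proof -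
      have "(\<Sum>i=0..N. kker N p m 0 j (real i) y * poly (kp N p l) (real i) * bweight N p i)
          = (\<Sum>k<m. fdiff_pow j (krav N p k) y / krav_nrm N p k *
                (\<Sum>i=0..N. krav N p k (real i) * krav N p l (real i) * bweight N p i))"
        unfolding kker0 poly_kp sum_distrib_right sum_distrib_left
        by (subst sum.swap) (simp add: mult_ac)
      also have "\<dots> = (\<Sum>k\<in>{l}. fdiff_pow j (krav N p k) y / krav_nrm N p k *
                (\<Sum>i=0..N. krav N p k (real i) * krav N p l (real i) * bweight N p i))"
        by (rule sum.mono_neutral_right) (use l m orth_krav[OF p0] in auto)
      also have "\<dots> = fdiff_pow j (krav N p l) y"
      proof -
        have "0 < krav_nrm N p l" by (rule nrm_pos[OF p]) (use l m in simp)
        then show ?thesis by (simp add: krav_nrm_def power2_eq_square)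
      qed
      finally show ?thesis unfolding F_def poly_kp_fun by simp
    qed
  qed
  then show ?thesis unfolding F_def by simp
qed

lemma kker_dx: "fdiff_pow j (\<lambda>t. kker N p m 0 j t z) y = kker N p m j j y z"
proof -
  have "fdiff_pow j (\<lambda>t. kker N p m 0 j t z) y
      = (\<Sum>k<m. fdiff_pow j (\<lambda>t. (fdiff_pow j (krav N p k) z / krav_nrm N p k) * krav N p k t) y)"
    unfolding kker0 by (subst fdiff_pow_sum[symmetric]) (simp add: mult_ac)
  also have "\<dots> = kker N p m j j y z"
    unfolding kker_def fdiff_pow_cmult by (simp add: mult_ac)
  finally show ?thesis .
qed

lemma wCS:
  fixes a b h :: "nat \<Rightarrow> real"
  assumes h: "\<And>k. k \<in> A \<Longrightarrow> 0 < h k" and fin: "finite A"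
  shows "(\<Sum>k\<in>A. a k * b k / h k)^2 \<le> (\<Sum>k\<in>A. a k * a k / h k) * (\<Sum>k\<in>A. b k * b k / h k)"
proof (cases "(\<Sum>k\<in>A. b k * b k / h k) = 0")
  case True
  have "\<forall>k\<in>A. b k * b k / h k = 0"
    using True by (subst sum_nonneg_eq_0_iff[OF fin, symmetric]) (use h in \<open>auto intro!: divide_nonneg_pos\<close>)
  then have "\<forall>k\<in>A. b k = 0" using h by fastforce
  then show ?thesis by simp
next
  case False
  define B where "B = (\<Sum>k\<in>A. b k * b k / h k)"
  define S where "S = (\<Sum>k\<in>A. a k * b k / h k)"
  define Aa where "Aa = (\<Sum>k\<in>A. a k * a k / h k)"
  have B0: "B \<ge> 0" unfolding B_def by (rule sum_nonneg) (use h in \<open>auto intro!: divide_nonneg_pos\<close>)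
  then have Bp: "B > 0" using False B_def by simp
  define r where "r = S / B"
  have "0 \<le> (\<Sum>k\<in>A. (a k - r * b k) * (a k - r * b k) / h k)"
    by (rule sum_nonneg) (use h in \<open>auto intro!: divide_nonneg_pos\<close>)
  also have "\<dots> = Aa - 2 * r * S + r * r * B"
    unfolding Aa_def S_def B_def
    by (simp add: algebra_simps diff_divide_distrib add_divide_distrib sum_subtractf sum.distrib sum_distrib_left)
  also have "\<dots> = Aa - S * S / B"
    unfolding r_def using Bp by (simp add: field_simps)
  finally have "S * S / B \<le> Aa" by simp
  then have "S * S \<le> Aa * B" using Bp by (simp add: pos_divide_le_eq)
  then show ?thesis unfolding S_def Aa_def B_def by (simp add: power2_eq_square)
qed


lemma fdiff_pow_lin3:
  "fdiff_pow i (\<lambda>x. a * f x + b * g x + c * h x) y = a * fdiff_pow i f y + b * fdiff_pow i g y + c * fdiff_pow i h y"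
  by (induction i arbitrary: y) (simp_all add: fdiff_def algebra_simps)

lemma ffac_nz: "(\<And>i. i \<le> j \<Longrightarrow> z - real i \<noteq> 0) \<Longrightarrow> ffac z (Suc j) \<noteq> 0"
  unfolding ffac_def by (auto simp: less_Suc_eq_le)

lemma sob_diff: "sob_ip N p lam mu j (a - b) r = sob_ip N p lam mu j a r - sob_ip N p lam mu j b r"
  unfolding sob_ip_def fdiff_pow_poly_diff
  by (simp add: algebra_simps sum_subtractf)

lemma sob_self:
  assumes "0 < p" "p < 1" "0 < lam" "0 < mu" "d \<noteq> 0" "degree d \<le> N"
  shows "0 < sob_ip N p lam mu j d d"
proof -
  have "0 < (\<Sum>x=0..N. (poly d (real x))^2 * bweight N p x)" by (rule sq_sum_pos) (use assms in auto)
  moreover have "0 \<le> lam * fdiff_pow j (poly d) 0 * fdiff_pow j (poly d) 0"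
    using assms by (simp add: mult.assoc)
  moreover have "0 \<le> mu * fdiff_pow j (poly d) (real N) * fdiff_pow j (poly d) (real N)"
    using assms by (simp add: mult.assoc)
  ultimately show ?thesis unfolding sob_ip_def by (simp add: power2_eq_square)
qed


theorem mainTheorem4:
  fixes N n j :: nat and p lam mu x :: real
  assumes "0 < p" "p < 1" "0 < lam" "0 < mu"
    and "2 \<le> n" "n \<le> N"
    and "\<forall>i\<le>j. x \<noteq> real i \<and> x \<noteq> real N + real i"
  shows "ks N p lam mu j (n - 1) x
         = C2 N p lam mu j n x * krav N p n x + D2 N p lam mu j n x * krav N p (n - 1) x"
proof -
  have p: "0 < p" "p < 1" using assms by auto
  have p0: "p \<noteq> 0" using p by simp
  define m where "m = n - 1"
  have nm: "n = Suc m" using assms(5) unfolding m_def by simp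
  have m1: "1 \<le> m" "Suc m \<le> N" "m \<le> N" using assms(5,6) nm by auto
  have hpos: "\<And>k. k \<le> N \<Longrightarrow> 0 < krav_nrm N p k" by (rule nrm_pos[OF p])
  define k00 where "k00 = kker N p m j j 0 0"
  define k0N where "k0N = kker N p m j j 0 (real N)"
  define kN0 where "kN0 = kker N p m j j (real N) 0"
  define kNN where "kNN = kker N p m j j (real N) (real N)"
  define d0 where "d0 = fdiff_pow j (krav N p m) 0"
  define dN where "dN = fdiff_pow j (krav N p m) (real N)"
  define P1 where "P1 = Phi1 N p lam mu j m"
  define P2 where "P2 = Phi2 N p lam mu j m"
  define dl where "dl = delta_c N p lam mu j m"
  have symm: "k0N = kN0" unfolding k0N_def kN0_def kker_def by (simp add: mult_ac)
  have kk_nonneg: "0 \<le> kker N p m j j y y" for y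
    unfolding kker_def
  proof (rule sum_nonneg)
    fix k assume "k \<in> {..<m}"
    then have "0 < krav_nrm N p k" using hpos m1 by simp
    then show "0 \<le> fdiff_pow j (krav N p k) y * fdiff_pow j (krav N p k) y / krav_nrm N p k"
      by simp
  qed
  have CS: "k0N^2 \<le> k00 * kNN"
    unfolding k0N_def k00_def kNN_def kker_def
    by (rule wCS) (use hpos m1 in auto)
  have dlpos: "1 \<le> dl"
  proof -
    have "dl = 1 + lam * k00 + mu * kNN + lam * mu * (k00 * kNN - k0N^2)"
      unfolding dl_def delta_c_def k00_def[symmetric] kNN_def[symmetric] k0N_def[symmetric] kN0_def[symmetric]
        symm[symmetric] by (simp add: algebra_simps power2_eq_square)
    moreover have "0 \<le> lam * k00" "0 \<le> mu * kNN" "0 \<le> lam * mu * (k00 * kNN - k0N^2)"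
      using assms(3,4) kk_nonneg CS unfolding k00_def kNN_def by auto
    ultimately show ?thesis by linarith
  qed
  have dl0: "dl \<noteq> 0" using dlpos by simp
  have dl_eq: "dl = (1 + lam * k00) * (1 + mu * kNN) - lam * mu * k0N * kN0"
    unfolding dl_def delta_c_def k00_def kNN_def k0N_def kN0_def ..
  have P1_eq: "P1 = (d0 * (1 + mu * kNN) - mu * k0N * dN) / dl"
    unfolding P1_def Phi1_def dl_def d0_def dN_def kNN_def k0N_def ..
  have P2_eq: "P2 = ((1 + lam * k00) * dN - lam * kN0 * d0) / dl"
    unfolding P2_def Phi2_def dl_def d0_def dN_def k00_def kN0_def ..
  have e1: "d0 - lam * P1 * k00 - mu * P2 * k0N = P1"
    unfolding P1_eq P2_eq using dl0 by (simp add: field_simps) (simp add: dl_eq algebra_simps)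
  have e2: "dN - lam * P1 * kN0 - mu * P2 * kNN = P2"
    unfolding P1_eq P2_eq using dl0 by (simp add: field_simps) (simp add: dl_eq algebra_simps)
  define R0 where "R0 = (\<Sum>k<m. smult (fdiff_pow j (krav N p k) 0 / krav_nrm N p k) (kp N p k))"
  define RN where "RN = (\<Sum>k<m. smult (fdiff_pow j (krav N p k) (real N) / krav_nrm N p k) (kp N p k))"
  define Q where "Q = kp N p m - smult (lam * P1) R0 - smult (mu * P2) RN"
  have pR: "poly (\<Sum>k<m. smult (fdiff_pow j (krav N p k) y / krav_nrm N p k) (kp N p k)) t = kker N p m 0 j t y" for y t
    unfolding kker0 poly_sum by (simp add: poly_kp mult_ac)
  have polyQ: "poly Q = (\<lambda>t. 1 * krav N p m t + (- (lam * P1)) * kker N p m 0 j t 0 + (- (mu * P2)) * kker N p m 0 j t (real N))"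
    unfolding Q_def R0_def RN_def by (rule ext) (simp add: pR poly_kp)
  have degR: "degree (\<Sum>k<m. smult (c k) (kp N p k)) < m" for c
  proof -
    have "degree (\<Sum>k<m. smult (c k) (kp N p k)) \<le> m - 1"
      by (rule degree_sum_le) (auto intro!: order.trans[OF degree_smult_le] order.trans[OF degree_kp_le])
    then show ?thesis using m1 by simp
  qed
  have degQle: "degree Q \<le> m"
    unfolding Q_def using degR[of "\<lambda>k. fdiff_pow j (krav N p k) 0 / krav_nrm N p k"]
      degR[of "\<lambda>k. fdiff_pow j (krav N p k) (real N) / krav_nrm N p k"] degree_kp_le[of N p m]
    unfolding R0_def[symmetric] RN_def[symmetric]
    by (intro degree_diff_le) (auto intro: order.trans[OF degree_smult_le])
  have coeffQ: "coeff Q m = 1"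
    unfolding Q_def using degR[of "\<lambda>k. fdiff_pow j (krav N p k) 0 / krav_nrm N p k"]
      degR[of "\<lambda>k. fdiff_pow j (krav N p k) (real N) / krav_nrm N p k"] coeff_kp_top[OF m1(3) p0]
    unfolding R0_def[symmetric] RN_def[symmetric] by (simp add: coeff_eq_0)
  have degQ: "degree Q = m" using degQle coeffQ by (metis le_antisym le_degree zero_neq_one)
  have leadQ: "lead_coeff Q = 1" using degQ coeffQ by simp
  have DQ: "fdiff_pow j (poly Q) y = fdiff_pow j (krav N p m) y - lam * P1 * kker N p m j j y 0 - mu * P2 * kker N p m j j y (real N)" for y
    unfolding polyQ fdiff_pow_lin3 kker_dx[symmetric] by simp
  have DQ0: "fdiff_pow j (poly Q) 0 = P1" using e1 DQ[of 0] unfolding d0_def k00_def k0N_def by simp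
  have DQN: "fdiff_pow j (poly Q) (real N) = P2" using e2 DQ[of "real N"] unfolding dN_def kN0_def kNN_def by simp
  have orthQ: "sob_ip N p lam mu j Q r = 0" if r: "degree r < m" for r
  proof -
    have "(\<Sum>i=0..N. poly Q (real i) * poly r (real i) * bweight N p i)
       = (\<Sum>i=0..N. krav N p m (real i) * poly r (real i) * bweight N p i)
         - lam * P1 * (\<Sum>i=0..N. kker N p m 0 j (real i) 0 * poly r (real i) * bweight N p i)
         - mu * P2 * (\<Sum>i=0..N. kker N p m 0 j (real i) (real N) * poly r (real i) * bweight N p i)"
      unfolding polyQ by (simp add: algebra_simps sum_subtractf sum_distrib_left sum.distrib)
    also have "\<dots> = - lam * P1 * fdiff_pow j (poly r) 0 - mu * P2 * fdiff_pow j (poly r) (real N)"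
      using orth_poly[OF m1(3) p0 r] reproduce[OF p m1(3) r] by simp
    finally show ?thesis unfolding sob_ip_def DQ0 DQN by simp
  qed
  have ksQ: "ks_poly N p lam mu j m = Q"
    unfolding ks_poly_def
  proof (rule the_equality)
    show "degree Q = m \<and> lead_coeff Q = 1 \<and> (\<forall>r. degree r < m \<longrightarrow> sob_ip N p lam mu j Q r = 0)"
      using degQ leadQ orthQ by simp
    fix q assume q: "degree q = m \<and> lead_coeff q = 1 \<and> (\<forall>r. degree r < m \<longrightarrow> sob_ip N p lam mu j q r = 0)"
    define dd where "dd = q - Q"
    show "q = Q"
    proof (rule ccontr)
      assume "q \<noteq> Q"
      then have dd0: "dd \<noteq> 0" unfolding dd_def by simp
      have "degree dd \<le> m" unfolding dd_def by (intro degree_diff_le) (use q degQ in simp_all)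
      moreover have "coeff dd m = 0"
      proof -
        have "coeff q m = 1" using q by auto
        then show ?thesis unfolding dd_def using coeffQ by simp
      qed
      moreover have "coeff dd (degree dd) \<noteq> 0" using dd0 by simp
      ultimately have ddm: "degree dd < m" by (cases "degree dd = m") auto
      have "sob_ip N p lam mu j dd dd = 0"
        unfolding dd_def sob_diff using q orthQ ddm unfolding dd_def by simp
      moreover have "0 < sob_ip N p lam mu j dd dd"
        by (rule sob_self) (use assms dd0 ddm m1 in auto)
      ultimately show False by simp
    qed
  qed
  have ks_val: "ks N p lam mu j m x = poly Q x"
    unfolding ks_def ksQ ..
  have nz0: "ffac (x - 0) (Suc j) \<noteq> 0" by (rule ffac_nz) (use assms(7) in auto)
  have nzN: "ffac (x - real N) (Suc j) \<noteq> 0" by (rule ffac_nz) (use assms(7) in \<open>auto simp: algebra_simps\<close>)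
  have c0: "kker N p m 0 j x 0 = A_fn N p j m x 0 * krav N p m x + B_fn N p j m x 0 * krav N p (m - 1) x"
    by (rule kker_CD[OF p m1(1) m1(3) nz0])
  have cN: "kker N p m 0 j x (real N) = A_fn N p j m x (real N) * krav N p m x + B_fn N p j m x (real N) * krav N p (m - 1) x"
    by (rule kker_CD[OF p m1(1) m1(3) nzN])
  have val: "poly Q x = C1 N p lam mu j m x * krav N p m x + D1 N p lam mu j m x * krav N p (m - 1) x"
    unfolding polyQ c0 cN C1_def D1_def P1_def P2_def by (simp add: algebra_simps)
  have rec: "krav N p n x = (x - alpha_c N p m) * krav N p m x - beta_c N p m * krav N p (m - 1) x"
    unfolding nm by (rule krav_rec[OF p0 m1(1) m1(2)])
  have b0: "beta_c N p m \<noteq> 0" unfolding beta_c_def using m1 p by auto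
  have nm1: "n - 1 = m" using nm by simp
  show ?thesis
    unfolding C2_def D2_def nm1 unfolding ks_val val rec using b0 by (simp add: field_simps)
qed


end
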